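(* Let $(\pi_r)_{r\in\mathbb{N}}$ be periods and let $(K_t)_{t\in\mathbb{N}}$ be the multiperiodic process with periods $(\pi_r)$. Then $(K_t)$ is finite (i.e. $K_t<\infty$ for all $t\in\mathbb{N}$ almost surely) if and only if $$\sum_{r=1}^\infty\frac{1}{\pi_r}=\infty\quad\text{or}\quad \pi_s=1\text{ for some } s\in\mathbb{N}.$$
   Context: $\mathbb{N}=\{1,2,3,\dots\}$. Multiperiodic sequence with periods $\pi_r\in\mathbb{N}$ and seeds $\sigma_r\in\{1,\dots,\pi_r\}$: the sequence $(k_t)_{t\in\mathbb{N}}$ with values in $\mathbb{N}\cup\{\infty\}$ such that for each $r$, the subsequence obtained from $(k_t)$ by deleting all tokens $k_t<r$, denoted $(k^{(r)}_t)_{t\in\mathbb{N}}$, satisfies $k^{(r)}_t=r\iff t\equiv\sigma_r\pmod{\pi_r}$; entries left undefined for all $r$ are set to $\infty$. Equivalently: clocks $\phi_r$ start at $\sigma_r$; for each token, scan $r=1,2,\dots$, decrementing each clock with $\phi_r>1$, until the first $r$ with $\phi_r=1$, output that $r$ and reset $\phi_r=\pi_r$ (output $\infty$ if no such $r$ exists). The multiperiodic process with periods $(\pi_r)$ is the random multiperiodic sequence with these periods and independent random seeds $\Sigma_r$ with $P(\Sigma_r=i)=1/\pi_r$ for $i\in\{1,\dots,\pi_r\}$. *)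

theory Defs
  imports "HOL-Probability.Probability"
begin

text \<open>Periods pi r and seeds sigma r are indexed by r >= 1 (index 0 is unused).
  Clocks phi r are indexed by r >= 1 as well.\<close>

definition mp_fires :: "(nat \<Rightarrow> nat) \<Rightarrow> bool" where
  "mp_fires \<phi> \<longleftrightarrow> (\<exists>r\<ge>1. \<phi> r = 1)"

definition mp_first :: "(nat \<Rightarrow> nat) \<Rightarrow> nat" where
  "mp_first \<phi> = (LEAST r. 1 \<le> r \<and> \<phi> r = 1)"

definition mp_out :: "(nat \<Rightarrow> nat) \<Rightarrow> enat" where
  "mp_out \<phi> = (if mp_fires \<phi> then enat (mp_first \<phi>) else \<infinity>)"

definition mp_step :: "(nat \<Rightarrow> nat) \<Rightarrow> (nat \<Rightarrow> nat) \<Rightarrow> (nat \<Rightarrow> nat)" where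
  "mp_step \<pi> \<phi> =
     (if mp_fires \<phi> then
        (\<lambda>r. if 1 \<le> r \<and> r < mp_first \<phi> then \<phi> r - 1
             else if r = mp_first \<phi> then \<pi> r else \<phi> r)
      else (\<lambda>r. if 1 \<le> r then \<phi> r - 1 else \<phi> r))"

text \<open>Clock state before token t+1 (clocks start at the seeds).\<close>
primrec mp_clocks :: "(nat \<Rightarrow> nat) \<Rightarrow> (nat \<Rightarrow> nat) \<Rightarrow> nat \<Rightarrow> (nat \<Rightarrow> nat)" where
  "mp_clocks \<pi> \<sigma> 0 = \<sigma>"
| "mp_clocks \<pi> \<sigma> (Suc t) = mp_step \<pi> (mp_clocks \<pi> \<sigma> t)"

definition mp_seq :: "(nat \<Rightarrow> nat) \<Rightarrow> (nat \<Rightarrow> nat) \<Rightarrow> nat \<Rightarrow> enat" where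
  "mp_seq \<pi> \<sigma> t = mp_out (mp_clocks \<pi> \<sigma> (t - 1))"

definition mp_seed_measure :: "(nat \<Rightarrow> nat) \<Rightarrow> (nat \<Rightarrow> nat) measure" where
  "mp_seed_measure \<pi> = (\<Pi>\<^sub>M r\<in>{1..}. measure_pmf (pmf_of_set {1..\<pi> r}))"

end

theory Submission
  imports Defs
begin

lemma step_char:
  assumes "1 \<le> r"
  shows "mp_step \<pi> \<phi> r = (if \<exists>s. 1 \<le> s \<and> s < r \<and> \<phi> s = 1 then \<phi> r
     else if \<phi> r = 1 then \<pi> r else \<phi> r - 1)"
proof (cases "mp_fires \<phi>")
  case True
  then obtain s0 where s0: "1 \<le> s0" "\<phi> s0 = 1" unfolding mp_fires_def by auto
  define a where "a = mp_first \<phi>"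
  have a1: "1 \<le> a \<and> \<phi> a = 1" unfolding a_def mp_first_def
    by (rule LeastI[of _ s0]) (use s0 in auto)
  have amin: "\<And>s. 1 \<le> s \<Longrightarrow> \<phi> s = 1 \<Longrightarrow> a \<le> s" unfolding a_def mp_first_def
    by (rule Least_le) auto
  show ?thesis
  proof (cases "a < r")
    case True
    then show ?thesis using a1 assms unfolding mp_step_def using \<open>mp_fires \<phi>\<close>
      by (auto simp: a_def[symmetric])
  next
    case False
    then have "\<not> (\<exists>s. 1 \<le> s \<and> s < r \<and> \<phi> s = 1)" using amin by force
    moreover have "\<phi> r = 1 \<longleftrightarrow> a = r" using False amin a1 assms by force
    ultimately show ?thesis using False assms \<open>mp_fires \<phi>\<close> unfolding mp_step_def
      by (auto simp: a_def[symmetric])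
  qed
next
  case False
  then show ?thesis using assms unfolding mp_step_def mp_fires_def by auto
qed

definition Sb :: "(nat \<Rightarrow> nat) \<Rightarrow> nat \<Rightarrow> (nat \<Rightarrow> nat) set" where
  "Sb \<pi> n = PiE {1..n} (\<lambda>r. {1..\<pi> r})"

definition Gn :: "(nat \<Rightarrow> nat) \<Rightarrow> nat \<Rightarrow> (nat \<Rightarrow> nat) \<Rightarrow> (nat \<Rightarrow> nat)" where
  "Gn \<pi> n x = restrict (mp_step \<pi> x) {1..n}"

lemma step_local:
  assumes "\<forall>r\<in>{1..n}. \<phi> r = \<psi> r" "r \<in> {1..n}"
  shows "mp_step \<pi> \<phi> r = mp_step \<pi> \<psi> r"
proof -
  have "(\<exists>s. 1 \<le> s \<and> s < r \<and> \<phi> s = 1) = (\<exists>s. 1 \<le> s \<and> s < r \<and> \<psi> s = 1)"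
    using assms by auto
  moreover have "\<phi> r = \<psi> r" using assms by auto
  moreover have r1: "1 \<le> r" using assms by auto
  ultimately show ?thesis unfolding step_char[OF r1] by presburger
qed

lemma clocks_restrict:
  "restrict (mp_clocks \<pi> \<sigma> t) {1..n} = (Gn \<pi> n ^^ t) (restrict \<sigma> {1..n})"
proof (induction t)
  case 0 then show ?case by simp
next
  case (Suc t)
  have "restrict (mp_clocks \<pi> \<sigma> (Suc t)) {1..n} = Gn \<pi> n (restrict (mp_clocks \<pi> \<sigma> t) {1..n})"
    unfolding Gn_def by (auto intro!: restrict_ext step_local)
  then show ?case using Suc.IH by (metis funpow.simps(2) comp_apply)
qed

lemma Gn_maps:
  assumes "\<forall>r\<ge>1. \<pi> r \<ge> 1" "x \<in> Sb \<pi> n"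
  shows "Gn \<pi> n x \<in> Sb \<pi> n"
  using assms unfolding Sb_def Gn_def
  by (auto simp: step_char PiE_iff)

lemma Gn_inj:
  assumes "\<forall>r\<ge>1. \<pi> r \<ge> 1"
  shows "inj_on (Gn \<pi> n) (Sb \<pi> n)"
proof
  fix x y assume x: "x \<in> Sb \<pi> n" and y: "y \<in> Sb \<pi> n" and eq: "Gn \<pi> n x = Gn \<pi> n y"
  have "\<forall>r. r \<in> {1..n} \<longrightarrow> x r = y r"
  proof (rule allI, induct_tac r rule: less_induct)
    fix r assume IH: "\<And>s. s < r \<Longrightarrow> s \<in> {1..n} \<longrightarrow> x s = y s"
    show "r \<in> {1..n} \<longrightarrow> x r = y r"
    proof
      assume r: "r \<in> {1..n}"
      have c: "(\<exists>s. 1 \<le> s \<and> s < r \<and> x s = 1) = (\<exists>s. 1 \<le> s \<and> s < r \<and> y s = 1)"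
        using IH r by auto
      have e: "mp_step \<pi> x r = mp_step \<pi> y r" using eq r unfolding Gn_def
        by (metis restrict_apply')
      have xr: "x r \<in> {1..\<pi> r}" "y r \<in> {1..\<pi> r}" using x y r unfolding Sb_def by auto
      show "x r = y r"
      proof (cases "\<exists>s. 1 \<le> s \<and> s < r \<and> x s = 1")
        case True then show ?thesis using e c r by (simp add: step_char)
      next
        case False
        have nc: "\<not> (\<exists>s. 1 \<le> s \<and> s < r \<and> y s = 1)" using False c by blast
        have r1: "1 \<le> r" using r by auto
        have "mp_step \<pi> x r = (if x r = 1 then \<pi> r else x r - 1)"
          by (simp only: step_char[OF r1] False if_False)
        moreover have "mp_step \<pi> y r = (if y r = 1 then \<pi> r else y r - 1)"
          by (simp only: step_char[OF r1] nc if_False)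
        ultimately have "(if x r = 1 then \<pi> r else x r - 1) = (if y r = 1 then \<pi> r else y r - 1)"
          using e by simp
        then show ?thesis using xr by (auto split: if_splits)
      qed
    qed
  qed
  then show "x = y" using x y unfolding Sb_def
    apply (intro ext)
    subgoal for i by (cases "1 \<le> i \<and> i \<le> n") (auto simp: PiE_iff extensional_def)
    done
qed

lemma Gn_bij:
  assumes "\<forall>r\<ge>1. \<pi> r \<ge> 1"
  shows "bij_betw (Gn \<pi> n ^^ t) (Sb \<pi> n) (Sb \<pi> n)"
proof -
  have fin: "finite (Sb \<pi> n)" unfolding Sb_def by (auto intro!: finite_PiE)
  have "Gn \<pi> n ` Sb \<pi> n = Sb \<pi> n"
    using endo_inj_surj[OF fin _ Gn_inj[OF assms]] Gn_maps[OF assms] by blast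
  then have "bij_betw (Gn \<pi> n) (Sb \<pi> n) (Sb \<pi> n)" using Gn_inj[OF assms] by (simp add: bij_betw_def)
  then show ?thesis by (rule bij_betw_funpow)
qed

abbreviation Mi :: "(nat \<Rightarrow> nat) \<Rightarrow> nat \<Rightarrow> nat measure" where
  "Mi \<pi> \<equiv> (\<lambda>r. measure_pmf (pmf_of_set {1..\<pi> r}))"

lemma singleton_Pi: "x \<in> Sb \<pi> n \<Longrightarrow> {x} = PiE {1..n} (\<lambda>i. {x i})"
  unfolding Sb_def by (auto simp: PiE_iff extensional_def intro!: ext)

lemma cyl:
  assumes periods: "\<forall>r\<ge>1. \<pi> r \<ge> 1" and C: "C \<subseteq> Sb \<pi> n"
  shows "emeasure (mp_seed_measure \<pi>) (prod_emb {1..} (Mi \<pi>) {1..n} C)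
     = ennreal (real (card C) * (\<Prod>r\<in>{1..n}. 1 / real (\<pi> r)))"
proof -
  interpret product_prob_space "Mi \<pi>" "{1..}::nat set"
    by unfold_locales
  have fin: "finite C" using C unfolding Sb_def by (rule finite_subset) (auto intro!: finite_PiE)
  have sing: "{x} \<in> sets (PiM {1..n} (Mi \<pi>))" if "x \<in> C" for x
    using singleton_Pi[of x \<pi> n] that C by (auto intro!: sets_PiM_I_finite)
  have CS: "C \<in> sets (PiM {1..n} (Mi \<pi>))"
  proof -
    have "C = (\<Union>x\<in>C. {x})" by auto
    also have "\<dots> \<in> sets (PiM {1..n} (Mi \<pi>))" using fin sing by (intro sets.finite_UN) auto
    finally show ?thesis .
  qed
  have pt: "emeasure (PiM {1..n} (Mi \<pi>)) {x} = (\<Prod>r\<in>{1..n}. ennreal (1 / real (\<pi> r)))"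
    if "x \<in> C" for x
  proof -
    have xS: "x \<in> Sb \<pi> n" using that C by auto
    have "emeasure (PiM {1..n} (Mi \<pi>)) {x} = (\<Prod>r\<in>{1..n}. emeasure (Mi \<pi> r) {x r})"
      by (subst singleton_Pi[OF xS]) (rule emeasure_PiM, auto)
    also have "\<dots> = (\<Prod>r\<in>{1..n}. ennreal (1 / real (\<pi> r)))"
    proof (rule prod.cong)
      fix r assume r: "r \<in> {1..n}"
      then have ne: "{1..\<pi> r} \<noteq> {}" using periods by auto
      have "x r \<in> {1..\<pi> r}" using xS r unfolding Sb_def by auto
      then show "emeasure (Mi \<pi> r) {x r} = ennreal (1 / real (\<pi> r))"
        using ne by (simp add: emeasure_pmf_single)
    qed simp
    finally show ?thesis .
  qed
  have "emeasure (mp_seed_measure \<pi>) (prod_emb {1..} (Mi \<pi>) {1..n} C) = emeasure (PiM {1..n} (Mi \<pi>)) C"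
    unfolding mp_seed_measure_def by (rule emeasure_PiM_emb') (use CS in auto)
  also have "\<dots> = (\<Sum>x\<in>C. emeasure (PiM {1..n} (Mi \<pi>)) {x})"
    by (rule emeasure_eq_sum_singleton[OF fin sing])
  also have "\<dots> = (\<Sum>x\<in>C. (\<Prod>r\<in>{1..n}. ennreal (1 / real (\<pi> r))))"
    using pt by simp
  also have "\<dots> = ennreal (real (card C) * (\<Prod>r\<in>{1..n}. 1 / real (\<pi> r)))"
    by (simp add: prod_ennreal ennreal_of_nat_eq_real_of_nat ennreal_mult'[symmetric] prod_nonneg)
  finally show ?thesis .
qed

lemma fin_sets:
  assumes C: "C \<subseteq> Sb \<pi> n"
  shows "C \<in> sets (PiM {1..n} (Mi \<pi>))"
proof -
  have fin: "finite C" using C unfolding Sb_def by (rule finite_subset) (auto intro!: finite_PiE)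
  have sing: "{x} \<in> sets (PiM {1..n} (Mi \<pi>))" if "x \<in> C" for x
    using singleton_Pi[of x \<pi> n] that C by (auto intro!: sets_PiM_I_finite)
  have "C = (\<Union>x\<in>C. {x})" by auto
  also have "\<dots> \<in> sets (PiM {1..n} (Mi \<pi>))" using fin sing by (intro sets.finite_UN) auto
  finally show ?thesis .
qed

definition Dn :: "(nat \<Rightarrow> nat) \<Rightarrow> nat \<Rightarrow> (nat \<Rightarrow> nat) set" where
  "Dn \<pi> n = PiE {1..n} (\<lambda>r. {2..\<pi> r})"

definition an :: "(nat \<Rightarrow> nat) \<Rightarrow> nat \<Rightarrow> real" where
  "an \<pi> n = (\<Prod>r\<in>{1..n}. 1 - 1 / real (\<pi> r))"

lemma Dn_sub: "Dn \<pi> n \<subseteq> Sb \<pi> n"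
  unfolding Dn_def Sb_def by (auto simp: PiE_iff; force)

lemma card_Dn_an:
  assumes periods: "\<forall>r\<ge>1. \<pi> r \<ge> 1"
  shows "real (card (Dn \<pi> n)) * (\<Prod>r\<in>{1..n}. 1 / real (\<pi> r)) = an \<pi> n"
proof -
  have "real (card (Dn \<pi> n)) = (\<Prod>r\<in>{1..n}. real (\<pi> r - 1))"
    unfolding Dn_def by (simp add: card_PiE)
  then have "real (card (Dn \<pi> n)) * (\<Prod>r\<in>{1..n}. 1 / real (\<pi> r))
      = (\<Prod>r\<in>{1..n}. real (\<pi> r - 1) * (1 / real (\<pi> r)))"
    by (simp only: prod.distrib)
  also have "\<dots> = an \<pi> n" unfolding an_def
  proof (rule prod.cong)
    fix r assume "r \<in> {1..n}"
    then have "\<pi> r \<ge> 1" using periods by auto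
    then show "real (\<pi> r - 1) * (1 / real (\<pi> r)) = 1 - 1 / real (\<pi> r)"
      by (simp add: of_nat_diff field_simps)
  qed simp
  finally show ?thesis .
qed

lemma AE_range:
  assumes periods: "\<forall>r\<ge>1. \<pi> r \<ge> 1"
  shows "AE \<sigma> in mp_seed_measure \<pi>. \<forall>r\<ge>1. \<sigma> r \<in> {1..\<pi> r}"
proof -
  interpret product_prob_space "Mi \<pi>" "{1..}::nat set"
    by unfold_locales
  have "AE \<sigma> in mp_seed_measure \<pi>. 1 \<le> r \<longrightarrow> \<sigma> r \<in> {1..\<pi> r}" for r
  proof (cases "1 \<le> r")
    case True
    then have "1 \<le> \<pi> r" using periods by auto
    then have "AE x in Mi \<pi> r. x \<in> {1..\<pi> r}"
      using AE_measure_pmf[of "pmf_of_set {1..\<pi> r}"] by simp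
    then have "AE \<sigma> in mp_seed_measure \<pi>. \<sigma> r \<in> {1..\<pi> r}"
      unfolding mp_seed_measure_def by (rule AE_component[rotated]) (use True in auto)
    then show ?thesis by auto
  qed simp
  then show ?thesis by (subst AE_all_countable) auto
qed

lemma an_nonneg:
  assumes periods: "\<forall>r\<ge>1. \<pi> r \<ge> 1"
  shows "an \<pi> n \<ge> 0"
  unfolding an_def
proof (rule prod_nonneg)
  fix r assume "r \<in> {1..n}"
  then have "real (\<pi> r) \<ge> 1" using periods by auto
  then show "0 \<le> 1 - 1 / real (\<pi> r)" by (simp add: field_simps)
qed

lemma fwd:
  assumes periods: "\<forall>r\<ge>1. \<pi> r \<ge> 1" and small: "\<forall>\<epsilon>>0. \<exists>n. an \<pi> n < \<epsilon>"
  shows "AE \<sigma> in mp_seed_measure \<pi>. \<forall>t\<ge>1. mp_seq \<pi> \<sigma> t < \<infinity>"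
proof -
  interpret product_prob_space "Mi \<pi>" "{1..}::nat set"
    by unfold_locales
  have "AE \<sigma> in mp_seed_measure \<pi>. 1 \<le> t \<longrightarrow> mp_seq \<pi> \<sigma> t < \<infinity>" for t
  proof -
    define C where "C n = {x \<in> Sb \<pi> n. (Gn \<pi> n ^^ (t-1)) x \<in> Dn \<pi> n}" for n
    define N where "N = (\<Inter>n. prod_emb {1..} (Mi \<pi>) {1..n} (C n))"
    have Csub: "C n \<subseteq> Sb \<pi> n" for n unfolding C_def by auto
    have cardC: "card (C n) = card (Dn \<pi> n)" for n
    proof -
      have bij: "bij_betw (Gn \<pi> n ^^ (t-1)) (Sb \<pi> n) (Sb \<pi> n)" by (rule Gn_bij[OF periods])
      have inj: "inj_on (Gn \<pi> n ^^ (t-1)) (C n)"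
        using bij Csub by (metis bij_betw_def inj_on_subset)
      have "(Gn \<pi> n ^^ (t-1)) ` C n = Dn \<pi> n"
      proof
        show "(Gn \<pi> n ^^ (t-1)) ` C n \<subseteq> Dn \<pi> n" unfolding C_def by auto
        show "Dn \<pi> n \<subseteq> (Gn \<pi> n ^^ (t-1)) ` C n"
        proof
          fix y assume y: "y \<in> Dn \<pi> n"
          then have "y \<in> Sb \<pi> n" using Dn_sub by auto
          then obtain x where "x \<in> Sb \<pi> n" "(Gn \<pi> n ^^ (t-1)) x = y"
            using bij unfolding bij_betw_def by (metis imageE)
          then show "y \<in> (Gn \<pi> n ^^ (t-1)) ` C n" unfolding C_def using y by auto
        qed
      qed
      then show ?thesis using card_image[OF inj] by simp
    qed
    have mC: "emeasure (mp_seed_measure \<pi>) (prod_emb {1..} (Mi \<pi>) {1..n} (C n)) = ennreal (an \<pi> n)" for n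
      using cyl[OF periods Csub[of n]] cardC[of n] card_Dn_an[OF periods, of n] by simp
    have Cs: "prod_emb {1..} (Mi \<pi>) {1..n} (C n) \<in> sets (mp_seed_measure \<pi>)" for n
      unfolding mp_seed_measure_def
      by (rule measurable_prod_emb) (simp, rule fin_sets[OF Csub])
    have Nsets: "N \<in> sets (mp_seed_measure \<pi>)"
      unfolding N_def using Cs by auto
    have le: "emeasure (mp_seed_measure \<pi>) N \<le> ennreal (an \<pi> n)" for n
    proof -
      have "N \<subseteq> prod_emb {1..} (Mi \<pi>) {1..n} (C n)" unfolding N_def by auto
      then have "emeasure (mp_seed_measure \<pi>) N \<le> emeasure (mp_seed_measure \<pi>) (prod_emb {1..} (Mi \<pi>) {1..n} (C n))"
        by (intro emeasure_mono Cs)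
      then show ?thesis using mC by simp
    qed
    have N0: "emeasure (mp_seed_measure \<pi>) N = 0"
    proof (rule ccontr)
      assume ne: "emeasure (mp_seed_measure \<pi>) N \<noteq> 0"
      define m where "m = measure (mp_seed_measure \<pi>) N"
      have em: "emeasure (mp_seed_measure \<pi>) N = ennreal m"
        unfolding m_def mp_seed_measure_def by (rule P.emeasure_eq_measure)
      have "m \<ge> 0" unfolding m_def by simp
      with ne em have "m > 0" by (cases "m = 0") auto
      then obtain n where n: "an \<pi> n < m" using small by auto
      have "ennreal m \<le> ennreal (an \<pi> n)" using le[of n] em by simp
      then have "m \<le> an \<pi> n" using an_nonneg[OF periods, of n] by (simp add: ennreal_le_iff)
      then show False using n by simp
    qed
    have "AE \<sigma> in mp_seed_measure \<pi>. \<sigma> \<notin> N"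
      by (rule AE_not_in) (use Nsets N0 in auto)
    then show ?thesis using AE_range[OF periods] AE_space
    proof eventually_elim
      case (elim \<sigma>)
      show ?case
      proof (rule impI, rule ccontr)
        assume t1: "1 \<le> t" and "\<not> mp_seq \<pi> \<sigma> t < \<infinity>"
        then have "mp_seq \<pi> \<sigma> t = \<infinity>" using enat_ord_simps(4) by blast
        then have nf: "\<not> mp_fires (mp_clocks \<pi> \<sigma> (t-1))"
          unfolding mp_seq_def mp_out_def by (auto split: if_splits)
        have "\<sigma> \<in> prod_emb {1..} (Mi \<pi>) {1..n} (C n)" for n
        proof -
          have sS: "restrict \<sigma> {1..n} \<in> Sb \<pi> n" using elim unfolding Sb_def by auto
          have eq: "(Gn \<pi> n ^^ (t-1)) (restrict \<sigma> {1..n}) = restrict (mp_clocks \<pi> \<sigma> (t-1)) {1..n}"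
            by (simp only: clocks_restrict)
          have "(Gn \<pi> n ^^ (t-1)) (restrict \<sigma> {1..n}) \<in> Sb \<pi> n"
            using Gn_bij[OF periods, where n=n and t="t-1"] sS unfolding bij_betw_def by auto
          then have rg: "\<forall>i\<in>{1..n}. mp_clocks \<pi> \<sigma> (t-1) i \<in> {1..\<pi> i}"
            using eq unfolding Sb_def by (auto simp: restrict_PiE_iff Pi_iff)
          have cl: "\<forall>r\<ge>1. mp_clocks \<pi> \<sigma> (t-1) r \<noteq> 1" using nf unfolding mp_fires_def by auto
          have "\<forall>i\<in>{1..n}. mp_clocks \<pi> \<sigma> (t-1) i \<in> {2..\<pi> i}"
          proof
            fix i assume i: "i \<in> {1..n}"
            then have "mp_clocks \<pi> \<sigma> (t-1) i \<in> {1..\<pi> i}" "mp_clocks \<pi> \<sigma> (t-1) i \<noteq> 1"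
              using rg cl by auto
            then show "mp_clocks \<pi> \<sigma> (t-1) i \<in> {2..\<pi> i}" by auto
          qed
          then have "restrict (mp_clocks \<pi> \<sigma> (t-1)) {1..n} \<in> Dn \<pi> n"
            unfolding Dn_def by (simp only: restrict_PiE_iff)
          then have "restrict \<sigma> {1..n} \<in> C n" using sS eq unfolding C_def by auto
          moreover have "\<sigma> \<in> extensional {1..}"
            using elim by (auto simp: mp_seed_measure_def space_PiM PiE_iff)
          ultimately show ?thesis by (simp add: prod_emb_iff)
        qed
        then have "\<sigma> \<in> N" unfolding N_def by auto
        then show False using elim by auto
      qed
    qed
  qed
  then show ?thesis by (subst AE_all_countable) auto
qed

lemma psum: "(\<Sum>k<n. 1 / real (\<pi> (Suc k))) = (\<Sum>r\<in>{1..n}. 1 / real (\<pi> r))"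
  by (induction n) (auto simp: atLeastAtMostSuc_conv)

lemma an_le_exp:
  assumes periods: "\<forall>r\<ge>1. \<pi> r \<ge> 1"
  shows "an \<pi> n \<le> exp (- (\<Sum>r\<in>{1..n}. 1 / real (\<pi> r)))"
proof -
  have "an \<pi> n \<le> (\<Prod>r\<in>{1..n}. exp (- (1 / real (\<pi> r))))"
    unfolding an_def
  proof (rule prod_mono)
    fix r assume "r \<in> {1..n}"
    then have "real (\<pi> r) \<ge> 1" using periods by auto
    moreover have "1 + (- (1 / real (\<pi> r))) \<le> exp (- (1 / real (\<pi> r)))" by (rule exp_ge_add_one_self)
    ultimately show "0 \<le> 1 - 1 / real (\<pi> r) \<and> 1 - 1 / real (\<pi> r) \<le> exp (- (1 / real (\<pi> r)))"
      by (simp add: field_simps)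
  qed
  also have "\<dots> = exp (- (\<Sum>r\<in>{1..n}. 1 / real (\<pi> r)))"
    by (simp add: exp_sum[symmetric] sum_negf)
  finally show ?thesis .
qed

lemma small_of:
  assumes periods: "\<forall>r\<ge>1. \<pi> r \<ge> 1"
    and c: "\<not> summable (\<lambda>r. 1 / real (\<pi> (Suc r))) \<or> (\<exists>s\<ge>1. \<pi> s = 1)"
  shows "\<forall>\<epsilon>>0. \<exists>n. an \<pi> n < \<epsilon>"
proof (intro allI impI)
  fix \<epsilon> :: real assume e: "\<epsilon> > 0"
  show "\<exists>n. an \<pi> n < \<epsilon>"
  proof (cases "\<exists>s\<ge>1. \<pi> s = 1")
    case True
    then obtain s where s: "s \<ge> 1" "\<pi> s = 1" by auto
    have "an \<pi> s = 0" unfolding an_def using s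
      by (subst prod_zero_iff) (auto intro!: bexI[of _ s])
    then show ?thesis using e by (intro exI[of _ s]) simp
  next
    case False
    then have ns: "\<not> summable (\<lambda>r. 1 / real (\<pi> (Suc r)))" using c by auto
    have "\<exists>n. (\<Sum>k\<le>n. 1 / real (\<pi> (Suc k))) > - ln \<epsilon>"
    proof (rule ccontr)
      assume "\<not> ?thesis"
      then have "summable (\<lambda>r. 1 / real (\<pi> (Suc r)))"
        by (intro bounded_imp_summable[where B="- ln \<epsilon>"]) (auto simp: not_less)
      then show False using ns by simp
    qed
    then obtain n where n: "(\<Sum>k\<le>n. 1 / real (\<pi> (Suc k))) > - ln \<epsilon>" by auto
    have "(\<Sum>k\<le>n. 1 / real (\<pi> (Suc k))) = (\<Sum>r\<in>{1..Suc n}. 1 / real (\<pi> r))"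
      using psum[where n="Suc n" and \<pi>=\<pi>] by (simp add: lessThan_Suc_atMost)
    then have "exp (- (\<Sum>r\<in>{1..Suc n}. 1 / real (\<pi> r))) < exp (ln \<epsilon>)"
      using n by simp
    then have "an \<pi> (Suc n) < \<epsilon>" using an_le_exp[OF periods, of "Suc n"] e by simp
    then show ?thesis by blast
  qed
qed

lemma an_ge:
  assumes two: "\<forall>r\<ge>1. \<pi> r \<ge> 2" and sm: "summable (\<lambda>r. 1 / real (\<pi> (Suc r)))"
  shows "an \<pi> n \<ge> exp (- 2 * suminf (\<lambda>r. 1 / real (\<pi> (Suc r))))"
proof -
  have "exp (- 2 * suminf (\<lambda>r. 1 / real (\<pi> (Suc r)))) \<le> exp (- 2 * (\<Sum>r\<in>{1..n}. 1 / real (\<pi> r)))"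
  proof -
    have "(\<Sum>k<n. 1 / real (\<pi> (Suc k))) \<le> suminf (\<lambda>r. 1 / real (\<pi> (Suc r)))"
      by (rule sum_le_suminf[OF sm]) auto
    then show ?thesis using psum[where n=n and \<pi>=\<pi>] by simp
  qed
  also have "\<dots> = (\<Prod>r\<in>{1..n}. exp (- 2 * (1 / real (\<pi> r))))"
    by (simp add: exp_sum[symmetric] sum_distrib_left)
  also have "\<dots> \<le> an \<pi> n" unfolding an_def
  proof (rule prod_mono)
    fix r assume "r \<in> {1..n}"
    then have p2: "real (\<pi> r) \<ge> 2" using two by auto
    define x where "x = 1 / real (\<pi> r)"
    have x0: "0 \<le> x" and x2: "x \<le> 1/2" unfolding x_def using p2 by (auto simp: field_simps)
    have "- x - 2 * x\<^sup>2 \<le> ln (1 - x)" by (rule ln_one_minus_pos_lower_bound[OF x0 x2])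
    moreover have "- 2 * x \<le> - x - 2 * x\<^sup>2" using mult_left_mono[OF x2 x0] by (simp add: power2_eq_square)
    ultimately have "exp (- 2 * x) \<le> exp (ln (1 - x))" by simp
    also have "\<dots> = 1 - x" using x2 by simp
    finally show "0 \<le> exp (- 2 * (1 / real (\<pi> r))) \<and> exp (- 2 * (1 / real (\<pi> r))) \<le> 1 - 1 / real (\<pi> r)"
      unfolding x_def by simp
  qed
  finally show ?thesis .
qed

lemma bwd:
  assumes two: "\<forall>r\<ge>1. \<pi> r \<ge> 2" and sm: "summable (\<lambda>r. 1 / real (\<pi> (Suc r)))"
  shows "\<not> (AE \<sigma> in mp_seed_measure \<pi>. \<forall>t\<ge>1. mp_seq \<pi> \<sigma> t < \<infinity>)"
proof
  assume ae: "AE \<sigma> in mp_seed_measure \<pi>. \<forall>t\<ge>1. mp_seq \<pi> \<sigma> t < \<infinity>"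
  have periods: "\<forall>r\<ge>1. \<pi> r \<ge> 1" using two by (auto intro: order_trans[rotated])
  interpret product_prob_space "Mi \<pi>" "{1..}::nat set"
    by unfold_locales
  define E where "E n = prod_emb {1..} (Mi \<pi>) {1..n} (Dn \<pi> n)" for n
  have Es: "E n \<in> sets (mp_seed_measure \<pi>)" for n
    unfolding mp_seed_measure_def E_def
    by (rule measurable_prod_emb) (simp, rule fin_sets[OF Dn_sub])
  have mE: "emeasure (mp_seed_measure \<pi>) (E n) = ennreal (an \<pi> n)" for n
    unfolding E_def using cyl[OF periods Dn_sub[of \<pi> n]] card_Dn_an[OF periods, of n] by simp
  have dec: "decseq E"
  proof (rule decseq_SucI)
    fix n show "E (Suc n) \<subseteq> E n"
    proof
      fix \<sigma> assume "\<sigma> \<in> E (Suc n)"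
      then show "\<sigma> \<in> E n" unfolding E_def Dn_def by (auto simp: prod_emb_iff PiE_iff)
    qed
  qed
  define c where "c = exp (- 2 * suminf (\<lambda>r. 1 / real (\<pi> (Suc r))))"
  have "ennreal c \<le> (INF n. emeasure (mp_seed_measure \<pi>) (E n))"
    using an_ge[OF two sm] unfolding mE c_def by (auto intro!: INF_greatest ennreal_leI)
  also have "\<dots> = emeasure (mp_seed_measure \<pi>) (\<Inter>n. E n)"
    by (rule INF_emeasure_decseq) (use Es dec mE in auto)
  finally have pos: "ennreal c \<le> emeasure (mp_seed_measure \<pi>) (\<Inter>n. E n)" .
  have sub: "(\<Inter>n. E n) \<subseteq> {\<sigma> \<in> space (mp_seed_measure \<pi>). \<not> (\<forall>t\<ge>1. mp_seq \<pi> \<sigma> t < \<infinity>)}"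
  proof
    fix \<sigma> assume s: "\<sigma> \<in> (\<Inter>n. E n)"
    have sp: "\<sigma> \<in> space (mp_seed_measure \<pi>)" using s Es sets.sets_into_space by blast
    have "\<sigma> r \<noteq> 1" if r: "1 \<le> r" for r
    proof -
      have "\<sigma> \<in> E r" using s by auto
      then have "restrict \<sigma> {1..r} \<in> Dn \<pi> r" unfolding E_def by (simp add: prod_emb_iff)
      then have "\<sigma> r \<in> {2..\<pi> r}" using r unfolding Dn_def by (auto simp: PiE_iff)
      then show ?thesis by auto
    qed
    then have "\<not> mp_fires \<sigma>" unfolding mp_fires_def by auto
    then have "mp_seq \<pi> \<sigma> 1 = \<infinity>" unfolding mp_seq_def mp_out_def by simp
    then show "\<sigma> \<in> {\<sigma> \<in> space (mp_seed_measure \<pi>). \<not> (\<forall>t\<ge>1. mp_seq \<pi> \<sigma> t < \<infinity>)}"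
      using sp by auto
  qed
  from ae obtain N where N: "{\<sigma> \<in> space (mp_seed_measure \<pi>). \<not> (\<forall>t\<ge>1. mp_seq \<pi> \<sigma> t < \<infinity>)} \<subseteq> N"
    "emeasure (mp_seed_measure \<pi>) N = 0" "N \<in> sets (mp_seed_measure \<pi>)"
    by (rule AE_E)
  have "emeasure (mp_seed_measure \<pi>) (\<Inter>n. E n) \<le> emeasure (mp_seed_measure \<pi>) N"
    using sub N by (intro emeasure_mono) auto
  with pos N have "ennreal c \<le> 0" by simp
  moreover have "c > 0" unfolding c_def by simp
  ultimately show False by simp
qed

theorem theorem3:
  fixes \<pi> :: "nat \<Rightarrow> nat"
  assumes periods: "\<forall>r\<ge>1. \<pi> r \<ge> 1"
  shows "(AE \<sigma> in mp_seed_measure \<pi>. \<forall>t\<ge>1. mp_seq \<pi> \<sigma> t < \<infinity>)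
         \<longleftrightarrow> (\<not> summable (\<lambda>r. 1 / real (\<pi> (Suc r))) \<or> (\<exists>s\<ge>1. \<pi> s = 1))"
proof
  assume ae: "AE \<sigma> in mp_seed_measure \<pi>. \<forall>t\<ge>1. mp_seq \<pi> \<sigma> t < \<infinity>"
  show "\<not> summable (\<lambda>r. 1 / real (\<pi> (Suc r))) \<or> (\<exists>s\<ge>1. \<pi> s = 1)"
  proof (rule ccontr)
    assume "\<not> ?thesis"
    then have sm: "summable (\<lambda>r. 1 / real (\<pi> (Suc r)))" and n1: "\<forall>s\<ge>1. \<pi> s \<noteq> 1" by auto
    have "\<forall>r\<ge>1. \<pi> r \<ge> 2" using periods n1 by (metis le_antisym not_less_eq_eq numeral_2_eq_2 One_nat_def)
    from bwd[OF this sm] ae show False by simp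
  qed
next
  assume "\<not> summable (\<lambda>r. 1 / real (\<pi> (Suc r))) \<or> (\<exists>s\<ge>1. \<pi> s = 1)"
  from fwd[OF periods small_of[OF periods this]] show "AE \<sigma> in mp_seed_measure \<pi>. \<forall>t\<ge>1. mp_seq \<pi> \<sigma> t < \<infinity>" .
qed

end
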